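(* Let $\tau_0,\tau_1,\tau_2>0$. For any $0<\alpha<\beta$, we have $\mathcal{B}_\alpha\subset\mathcal{B}_\beta$.
   Context: $\mathcal{C}=\{z\in\mathbb{C}:\Re z\ge(1+\tau_0)|\Im z|\}\cap\{z\in\mathbb{C}:\tau_1<\Re z<\tau_2\}$; for $a=(a_1,\dots,a_n)\in\mathbb{R}^n$, $p_a(z)=z^n+a_1z^{n-1}+\dots+a_n$; and for $\alpha>0$, $\mathcal{B}_\alpha=\{a\in\mathbb{R}^n:\ p_a(z)/z^n\in\mathcal{C}\text{ for all } z \text{ with } |z|=\alpha\}$. *)

theory Defs
  imports "HOL-Analysis.Analysis"
begin

definition regionC :: "real \<Rightarrow> real \<Rightarrow> real \<Rightarrow> complex set" where
  "regionC t0 t1 t2 = {z. Re z \<ge> (1 + t0) * \<bar>Im z\<bar>} \<inter> {z. t1 < Re z \<and> Re z < t2}"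

definition pa :: "real list \<Rightarrow> complex \<Rightarrow> complex" where
  "pa a z = z ^ length a + (\<Sum>k=1..length a. complex_of_real (a ! (k - 1)) * z ^ (length a - k))"

definition setB :: "real \<Rightarrow> real \<Rightarrow> real \<Rightarrow> nat \<Rightarrow> real \<Rightarrow> real list set" where
  "setB t0 t1 t2 n \<alpha> = {a. length a = n \<and>
      (\<forall>z. cmod z = \<alpha> \<longrightarrow> pa a z / z ^ n \<in> regionC t0 t1 t2)}"

end

theory Submission
  imports Defs "HOL-Complex_Analysis.Complex_Analysis"
begin

definition qq :: "real list \<Rightarrow> complex \<Rightarrow> complex" where
  "qq a w = 1 + (\<Sum>k=1..length a. complex_of_real (a ! (k - 1)) * w ^ k)"

lemma qq_holo: "(\<lambda>w. c * qq a w) holomorphic_on S"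
  unfolding qq_def by (intro holomorphic_intros)

lemma qq_cont: "continuous_on S (\<lambda>w. c * qq a w)"
  unfolding qq_def by (intro continuous_intros)

lemma pa_qq:
  assumes "z \<noteq> 0"
  shows "pa a z / z ^ length a = qq a (1/z)"
proof -
  have "pa a z / z ^ length a = 1 + (\<Sum>k=1..length a. complex_of_real (a ! (k - 1)) * z ^ (length a - k) / z ^ length a)"
    using assms unfolding pa_def by (simp add: add_divide_distrib sum_divide_distrib)
  also have "\<dots> = qq a (1/z)"
    unfolding qq_def
  proof (intro arg_cong[where f="\<lambda>x. 1 + x"] sum.cong refl)
    fix k assume "k \<in> {1..length a}"
    hence k: "k \<le> length a" by auto
    have "z ^ length a = z ^ (length a - k) * z ^ k" using k
      by (metis le_add_diff_inverse2 power_add)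
    thus "complex_of_real (a ! (k - 1)) * z ^ (length a - k) / z ^ length a =
          complex_of_real (a ! (k - 1)) * (1 / z) ^ k"
      using assms by (simp add: field_simps power_one_over)
  qed
  finally show ?thesis .
qed

lemma max_re:
  fixes g :: "complex \<Rightarrow> complex"
  assumes R: "R > 0" and holo: "g holomorphic_on UNIV" and cont: "continuous_on UNIV g"
    and b: "\<And>w. cmod w = R \<Longrightarrow> Re (g w) \<le> M" and w: "cmod w \<le> R"
  shows "Re (g w) \<le> M"
proof -
  have "norm (exp (g w)) \<le> exp M"
  proof (rule maximum_modulus_frontier[where f="\<lambda>w. exp (g w)" and S="cball 0 R"])
    show "(\<lambda>w. exp (g w)) holomorphic_on interior (cball 0 R)"
    proof -
      have "(\<lambda>w. exp (g w)) holomorphic_on UNIV" using holo by (intro holomorphic_intros)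
      thus ?thesis by (rule holomorphic_on_subset) simp
    qed
    show "continuous_on (closure (cball 0 R)) (\<lambda>w. exp (g w))"
    proof -
      have "continuous_on UNIV (\<lambda>w. exp (g w))" using cont by (intro continuous_intros)
      thus ?thesis by (rule continuous_on_subset) simp
    qed
    show "bounded (cball (0::complex) R)" by simp
    fix z assume "z \<in> frontier (cball (0::complex) R)"
    hence "cmod z = R" using R by simp
    thus "norm (exp (g z)) \<le> exp M" using b by simp
  next
    show "w \<in> cball 0 R" using w by simp
  qed
  thus ?thesis by simp
qed

lemma max_re_strict:
  fixes g :: "complex \<Rightarrow> complex"
  assumes R: "R > 0" and holo: "g holomorphic_on UNIV" and cont: "continuous_on UNIV g"
    and b: "\<And>w. cmod w = R \<Longrightarrow> Re (g w) < d" and w: "cmod w \<le> R"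
  shows "Re (g w) < d"
proof -
  have "compact (sphere (0::complex) R)" by simp
  moreover have "sphere (0::complex) R \<noteq> {}" using R by simp
  moreover have "continuous_on (sphere 0 R) (\<lambda>w. Re (g w))"
  proof -
    have "continuous_on UNIV (\<lambda>w. Re (g w))" using cont by (intro continuous_intros)
    thus ?thesis by (rule continuous_on_subset) simp
  qed
  ultimately obtain s where s: "s \<in> sphere 0 R" "\<And>t. t \<in> sphere 0 R \<Longrightarrow> Re (g t) \<le> Re (g s)"
    using continuous_attains_sup[of "sphere 0 R" "\<lambda>w. Re (g w)"] by auto
  have "Re (g w) \<le> Re (g s)"
    by (rule max_re[OF R holo cont _ w]) (rule s(2), simp)
  also have "\<dots> < d" using b s by simp
  finally show ?thesis .
qed

theorem lemma4p3:
  fixes \<tau>0 \<tau>1 \<tau>2 \<alpha> \<beta> :: real and n :: nat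
  assumes "\<tau>0 > 0" and "\<tau>1 > 0" and "\<tau>2 > 0"
    and "0 < \<alpha>" and "\<alpha> < \<beta>"
  shows "setB \<tau>0 \<tau>1 \<tau>2 n \<alpha> \<subseteq> setB \<tau>0 \<tau>1 \<tau>2 n \<beta>"
proof
  fix a assume "a \<in> setB \<tau>0 \<tau>1 \<tau>2 n \<alpha>"
  hence len: "length a = n" and hA: "\<And>z. cmod z = \<alpha> \<Longrightarrow> pa a z / z ^ n \<in> regionC \<tau>0 \<tau>1 \<tau>2"
    unfolding setB_def by auto
  define R where "R = 1 / \<alpha>"
  have R: "R > 0" using assms R_def by simp
  have circ: "qq a w \<in> regionC \<tau>0 \<tau>1 \<tau>2" if "cmod w = R" for w
  proof -
    have w0: "w \<noteq> 0" using that R by auto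
    have "cmod (1/w) = \<alpha>" using that R_def assms by (simp add: norm_divide)
    hence "pa a (1/w) / (1/w) ^ n \<in> regionC \<tau>0 \<tau>1 \<tau>2" by (rule hA)
    moreover have "pa a (1/w) / (1/w) ^ n = qq a w" using pa_qq[of "1/w" a] w0 len by simp
    ultimately show ?thesis by simp
  qed
  have gen: "Re (c * qq a w) \<le> 0" if "cmod w \<le> R" "\<And>v. v \<in> regionC \<tau>0 \<tau>1 \<tau>2 \<Longrightarrow> Re (c * v) \<le> 0" for c w
    by (rule max_re[OF R qq_holo qq_cont _ that(1)]) (rule that(2), rule circ, assumption)
  have gens: "Re (c * qq a w) < d" if "cmod w \<le> R" "\<And>v. v \<in> regionC \<tau>0 \<tau>1 \<tau>2 \<Longrightarrow> Re (c * v) < d" for c d w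
    by (rule max_re_strict[OF R qq_holo qq_cont _ that(1)]) (rule that(2), rule circ, assumption)
  show "a \<in> setB \<tau>0 \<tau>1 \<tau>2 n \<beta>"
    unfolding setB_def mem_Collect_eq
  proof (intro conjI allI impI)
    show "length a = n" by (rule len)
    fix z :: complex assume z: "cmod z = \<beta>"
    have z0: "z \<noteq> 0" using z assms by auto
    define w where "w = 1 / z"
    have "cmod w = 1 / \<beta>" unfolding w_def using z by (simp add: norm_divide)
    moreover have "1 / \<beta> \<le> 1 / \<alpha>" using assms(4,5) by (simp add: frac_le)
    ultimately have wR: "cmod w \<le> R" unfolding R_def by simp
    have eq: "pa a z / z ^ n = qq a w" using pa_qq[OF z0, of a] len w_def by simp
    let ?v = "qq a w"
    have c1: "Re (complex_of_real (-1) * ?v) < - \<tau>1"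
      by (rule gens[OF wR]) (simp add: regionC_def)
    have c2: "Re (complex_of_real 1 * ?v) < \<tau>2"
      by (rule gens[OF wR]) (simp add: regionC_def)
    have c3: "Re (Complex (-1) (-(1+\<tau>0)) * ?v) \<le> 0"
    proof (rule gen[OF wR])
      fix v assume "v \<in> regionC \<tau>0 \<tau>1 \<tau>2"
      hence h: "Re v \<ge> (1 + \<tau>0) * \<bar>Im v\<bar>" by (simp add: regionC_def)
      have m: "(1 + \<tau>0) * Im v \<le> (1 + \<tau>0) * \<bar>Im v\<bar>"
        using assms(1) by (intro mult_left_mono) auto
      have e: "Re (Complex (-1) (-(1+\<tau>0)) * v) = (1+\<tau>0)*Im v - Re v"
        by (simp add: algebra_simps)
      show "Re (Complex (-1) (-(1+\<tau>0)) * v) \<le> 0" unfolding e using h m by linarith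
    qed
    have c4: "Re (Complex (-1) (1+\<tau>0) * ?v) \<le> 0"
    proof (rule gen[OF wR])
      fix v assume "v \<in> regionC \<tau>0 \<tau>1 \<tau>2"
      hence h: "Re v \<ge> (1 + \<tau>0) * \<bar>Im v\<bar>" by (simp add: regionC_def)
      have m: "(1 + \<tau>0) * (- Im v) \<le> (1 + \<tau>0) * \<bar>Im v\<bar>"
        using assms(1) by (intro mult_left_mono) auto
      have e: "Re (Complex (-1) (1+\<tau>0) * v) = -((1+\<tau>0)*Im v) - Re v"
        by (simp add: algebra_simps)
      show "Re (Complex (-1) (1+\<tau>0) * v) \<le> 0" unfolding e using h m by simp
    qed
    have e3: "Re (Complex (-1) (-(1+\<tau>0)) * ?v) = (1+\<tau>0)*Im ?v - Re ?v"
      by (simp add: algebra_simps)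
    have e4: "Re (Complex (-1) (1+\<tau>0) * ?v) = -((1+\<tau>0)*Im ?v) - Re ?v"
      by (simp add: algebra_simps)
    have "?v \<in> regionC \<tau>0 \<tau>1 \<tau>2"
    proof -
      have "Re ?v \<ge> (1 + \<tau>0) * \<bar>Im ?v\<bar>"
      proof (cases "Im ?v \<ge> 0")
        case True
        hence "\<bar>Im ?v\<bar> = Im ?v" by simp
        thus ?thesis using c3 e3 by simp
      next
        case False
        hence "\<bar>Im ?v\<bar> = - Im ?v" by simp
        thus ?thesis using c4 e4 by simp
      qed
      moreover have "\<tau>1 < Re ?v" using c1 by simp
      moreover have "Re ?v < \<tau>2" using c2 by simp
      ultimately show ?thesis by (simp add: regionC_def)
    qed
    thus "pa a z / z ^ n \<in> regionC \<tau>0 \<tau>1 \<tau>2" using eq by simp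
  qed
qed

end
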